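(* For all $m\ge0$, $$Q_{m+1}(x)=(2m+1)(2+3x)Q_m(x)-2x(1+x)Q_m'(x),\qquad Q_0(x)=1.$$
   Context: $P_m(x)=\sum_{i=0}^m d_i(m)x^i$ with $d_i(m)=2^{-2m}\sum_{k=i}^m 2^k\binom{2m-2k}{m-k}\binom{m+k}{k}\binom{k}{i}$ (the Boros–Moll polynomials); $Q_m(x)=2^m m!\,x^mP_m(1/x)$. *)

theory Defs
  imports "HOL-Computational_Algebra.Polynomial"
begin

definition bm_d :: "nat \<Rightarrow> nat \<Rightarrow> real" where
  "bm_d i m = (1 / 2 ^ (2*m)) * (\<Sum>k=i..m. 2 ^ k * real ((2*m - 2*k) choose (m - k))
                 * real ((m + k) choose k) * real (k choose i))"

definition bm_P :: "nat \<Rightarrow> real poly" where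
  "bm_P m = (\<Sum>i\<le>m. monom (bm_d i m) i)"

text \<open>Q_m(x) = 2^m m! x^m P_m(1/x) = 2^m m! sum_{i=0}^m d_i(m) x^(m-i), as a polynomial.\<close>
definition bm_Q :: "nat \<Rightarrow> real poly" where
  "bm_Q m = smult (2 ^ m * fact m) (\<Sum>i\<le>m. monom (bm_d i m) (m - i))"

end

theory Submission
  imports Defs
begin
lemma R1: "real (Suc a) * real ((2*a+2) choose (a+1)) = 2*(2*real a+1)*real ((2*a) choose a)"
proof -
  have le1: "a+1 \<le> 2*a+2" by simp
  have d1: "2*a+2-(a+1) = a+1" by simp
  have e1: "real ((2*a+2) choose (a+1)) = fact (2*a+2) / (fact (a+1) * fact (a+1))"
    using binomial_fact[OF le1, where 'a=real] unfolding d1 .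
  have le2: "a \<le> 2*a" by simp
  have d2: "2*a-a = a" by simp
  have e2: "real ((2*a) choose a) = fact (2*a) / (fact a * fact a)"
    using binomial_fact[OF le2, where 'a=real] unfolding d2 .
  have s: "2*a+2 = Suc (Suc (2*a))" "a+1 = Suc a" by simp_all
  have f1: "(fact (2*a+2)::real) = real (Suc (Suc (2*a))) * (real (Suc (2*a)) * fact (2*a))"
    unfolding s by (simp only: fact_Suc)
  have f2: "(fact (a+1)::real) = real (Suc a) * fact a"
    unfolding s by (simp only: fact_Suc)
  show ?thesis unfolding e1 e2 f1 f2 by (simp add: divide_simps) (simp add: algebra_simps)
qed
lemma R2: "real (m+1) * real ((m+1+k) choose k) = real (m+1+k) * real ((m+k) choose k)"
proof -
  have e1: "real ((m+1+k) choose k) = fact (m+1+k) / (fact k * fact (m+1))"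
    using binomial_fact[of k "m+1+k"] by simp
  have e2: "real ((m+k) choose k) = fact (m+k) / (fact k * fact m)"
    using binomial_fact[of k "m+k"] by simp
  show ?thesis unfolding e1 e2 by (simp add: fact_Suc divide_simps)
qed
lemma R3: "1 \<le> i \<Longrightarrow> i \<le> k \<Longrightarrow> real (Suc k - i) * real (k choose (i - 1)) = real i * real (k choose i)"
proof -
  assume i1: "1 \<le> i" and ik: "i \<le> k"
  then obtain j where ij: "i = Suc j" by (cases i) auto
  obtain b where kb: "k = i + b" using ik le_Suc_ex by blast
  have x: "k - j = Suc b" "k - Suc j = b" using kb ij by auto
  have e1: "real (k choose j) = fact k / (fact j * fact (Suc b))"
  proof -
    have "j \<le> k" using kb ij by simp
    from binomial_fact[OF this, where 'a=real] show ?thesis unfolding x .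
  qed
  have e2: "real (k choose Suc j) = fact k / (fact (Suc j) * fact b)"
  proof -
    have "Suc j \<le> k" using kb ij by simp
    from binomial_fact[OF this, where 'a=real] show ?thesis unfolding x .
  qed
  have g: "Suc k - i = Suc b" "i - 1 = j" using kb ij by auto
  show ?thesis
    apply (simp only: g)
    apply (simp only: e1 ij e2)
    by (simp add: fact_Suc divide_simps)
qed

lemma R4: "i \<le> k \<Longrightarrow> real (Suc k - i) * real (Suc k choose i) = real (Suc k) * real (k choose i)"
proof -
  assume ik: "i \<le> k"
  have e1: "real (Suc k choose i) = fact (Suc k) / (fact i * fact (Suc (k - i)))"
    using binomial_fact[of i "Suc k"] ik by (simp add: Suc_diff_le)
  have e2: "real (k choose i) = fact k / (fact i * fact (k - i))"
    using binomial_fact[of i k] ik by simp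
  have e3: "real (Suc k - i) = real (k - i) + 1" using ik by (simp add: Suc_diff_le)
  show ?thesis unfolding e1 e2 e3 fact_Suc[of "k-i"] fact_Suc[of k] by (simp add: divide_simps)
qed
lemma R5: "1 \<le> k \<Longrightarrow> real (m+1) * real ((m+k) choose (k-1)) = real k * real ((m+k) choose k)"
proof -
  assume "1 \<le> k"
  then obtain j where kj: "k = Suc j" by (cases k) auto
  have e1: "real ((m+k) choose (k-1)) = fact (m+k) / (fact j * fact (Suc m))"
    using binomial_fact[of j "m+k"] kj by simp
  have e2: "real ((m+k) choose k) = fact (m+k) / (fact (Suc j) * fact m)"
    using binomial_fact[of k "m+k"] kj by simp
  show ?thesis unfolding e1 e2 fact_Suc[of j] fact_Suc[of m] using kj by (simp add: divide_simps)
qed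

lemma R6: "real ((2*m+2) choose (m+1)) = 2 * real ((2*m+1) choose m)"
proof -
  have s: "2*m+2 = Suc (2*m+1)" "m+1 = Suc m" by simp_all
  have "(2*m+2) choose (m+1) = ((2*m+1) choose m) + ((2*m+1) choose (Suc m))"
    unfolding s by (rule binomial_Suc_Suc)
  moreover have "(2*m+1) choose (Suc m) = (2*m+1) choose m"
  proof -
    have "(2*m+1) choose (Suc m) = (2*m+1) choose ((2*m+1) - Suc m)"
      by (rule binomial_symmetric) simp
    moreover have "(2*m+1) - Suc m = m" by simp
    ultimately show ?thesis by simp
  qed
  ultimately show ?thesis by simp
qed

definition sT :: "nat \<Rightarrow> nat \<Rightarrow> nat \<Rightarrow> real" where
  "sT m k i = 2 ^ k * real ((2*m - 2*k) choose (m - k)) * real ((m + k) choose k) * real (k choose i)"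

definition fT :: "nat \<Rightarrow> nat \<Rightarrow> nat \<Rightarrow> real" where
  "fT m i k = real (m+1) * sT (m+1) k i
     - 4 * real (m+i) * (if i = 0 \<or> m < k then 0 else sT m k (i-1))
     - 2 * (4 * real m + 2 * real i + 3) * (if m < k then 0 else sT m k i)"

definition GT :: "nat \<Rightarrow> nat \<Rightarrow> nat \<Rightarrow> real" where
  "GT m i k = (if 1 \<le> k \<and> k \<le> m+1 then - 2 * real (m+1) * 2 ^ k
      * real ((2*m+2-2*k) choose (m+1-k)) * real ((m+k) choose (k-1)) * real (k choose i) else 0)"

lemma step_last: "fT m i (m+1) = GT m i (Suc (m+1)) - GT m i (m+1)"
proof -
  have x: "2*(m+1)-2*(m+1) = 0" "m+1-(m+1) = 0" "m+1+(m+1) = 2*m+2"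
    "2*m+2-2*(m+1) = 0" "m+(m+1) = 2*m+1" "m+1-1 = m" by simp_all
  have a: "sT (m+1) (m+1) i = 2^(m+1) * real ((2*m+2) choose (m+1)) * real ((m+1) choose i)"
    unfolding sT_def x by simp
  have b: "GT m i (m+1) = -2*real(m+1)*2^(m+1)*real((2*m+1) choose m)*real((m+1) choose i)"
    unfolding GT_def x by simp
  have c: "GT m i (Suc (m+1)) = 0" by (simp add: GT_def)
  have d: "fT m i (m+1) = real(m+1) * sT (m+1) (m+1) i" by (simp add: fT_def)
  show ?thesis unfolding d a b c R6 by (simp add: algebra_simps)
qed

lemma step_zero: assumes "k \<le> m" "k < i" shows "fT m i k = GT m i (Suc k) - GT m i k"
proof (cases "i = Suc k")
  case False
  then have "Suc k < i" using assms by simp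
  then have z: "k choose (i - Suc 0) = 0" "k choose i = 0" "Suc k choose i = 0" by simp_all
  show ?thesis unfolding fT_def GT_def sT_def using assms by (simp add: z)
next
  case True
  define B1 where "B1 = real ((2*m - 2*k) choose (m - k))"
  define B2 where "B2 = real ((m + k) choose k)"
  have z: "k choose Suc k = 0" by simp
  have h2: "real ((m+1+k) choose k) = (real m+1+real k)/(real m+1) * B2"
    unfolding B2_def using R2[of m k] by (simp add: field_simps)
  have a: "fT m i k = - 4 * real (m+i) * (2^k * B1 * B2)"
    unfolding fT_def sT_def B1_def B2_def True using assms by (simp add: z algebra_simps)
  have b: "GT m i k = 0" unfolding GT_def True by (simp add: z)
  have c: "GT m i (Suc k) = -2*real(m+1)*2^(Suc k)*B1*((real m+1+real k)/(real m+1) * B2)"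
  proof -
    have "2*m+2-2*Suc k = 2*m-2*k" "m+1-Suc k = m-k" "m + Suc k = m+1+k" "Suc k - 1 = k" by auto
    then show ?thesis unfolding GT_def B1_def True using assms h2[symmetric] by simp
  qed
  have p: "real m + 1 > 0" by simp
  show ?thesis unfolding a b c using p True by (simp add: divide_simps) (simp add: algebra_simps)
qed

lemma scal: fixes a k i :: real
  assumes p: "k + 1 - i > 0" "a + 1 > 0" "k + a + 1 > 0"
  shows "(k+a+1)*(2*(2*a+1)/(a+1))*((k+a+1+k)/(k+a+1)) - 4*(k+a+i)*(i/(k+1-i)) - 2*(4*(k+a)+2*i+3)
    = -2*(k+a+1)*2*((k+a+1+k)/(k+a+1))*((k+1)/(k+1-i)) + 2*(k+a+1)*(2*(2*a+1)/(a+1))*(k/(k+a+1))"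
  using p by (simp add: divide_simps) algebra

lemma step_main: assumes "k \<le> m" "i \<le> k" shows "fT m i k = GT m i (Suc k) - GT m i k"
proof -
  obtain a where ma: "m = k + a" using assms le_Suc_ex by blast
  define B1 where "B1 = real ((2*m - 2*k) choose (m - k))"
  define B2 where "B2 = real ((m + k) choose k)"
  define B3 where "B3 = real (k choose i)"
  have x1: "2*(m+1)-2*k = 2*a+2" "m+1-k = a+1" "2*m-2*k = 2*a" "m-k = a" using ma by auto
  have B1a: "B1 = real ((2*a) choose a)" unfolding B1_def x1 ..
  have h1: "real ((2*(m+1)-2*k) choose (m+1-k)) = 2*(2*real a+1)/(real a+1) * B1"
    unfolding x1 B1a using R1[of a] by (simp add: field_simps)
  have h2: "real ((m+1+k) choose k) = (real m+1+real k)/(real m+1) * B2"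
    unfolding B2_def using R2[of m k] by (simp add: field_simps)
  have h3: "(if i = 0 then 0 else real (k choose (i-1))) = real i/(real k+1-real i) * B3"
  proof (cases "i = 0")
    case True then show ?thesis by simp
  next
    case False
    have "real (Suc k - i) = real k + 1 - real i" using assms by (simp add: of_nat_diff)
    moreover have "real k + 1 - real i > 0" using assms by simp
    ultimately show ?thesis using R3[of i k] False assms unfolding B3_def by (simp add: field_simps)
  qed
  have h4: "real (Suc k choose i) = (real k+1)/(real k+1-real i) * B3"
  proof -
    have "real (Suc k - i) = real k + 1 - real i" using assms by (simp add: of_nat_diff)
    moreover have "real k + 1 - real i > 0" using assms by simp
    ultimately show ?thesis using R4[of i k] assms unfolding B3_def by (simp add: field_simps)
  qed
  have E1: "sT (m+1) k i = 2^k * (2*(2*real a+1)/(real a+1) * B1) * ((real m+1+real k)/(real m+1) * B2) * B3"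
    unfolding sT_def h1[symmetric] h2[symmetric] B3_def by (simp add: add.commute add.left_commute)
  have E2: "(if i = 0 \<or> m < k then 0 else sT m k (i-1)) = 2^k*B1*B2*(real i/(real k+1-real i)*B3)"
    using assms h3[symmetric] unfolding sT_def B1_def B2_def by (cases "i=0") auto
  have E3: "(if m < k then 0 else sT m k i) = 2^k*B1*B2*B3"
    using assms unfolding sT_def B1_def B2_def B3_def by simp
  have E4: "GT m i (Suc k) = - 2 * real (m+1) * 2^(Suc k) * B1 * ((real m+1+real k)/(real m+1) * B2) * ((real k+1)/(real k+1-real i) * B3)"
  proof -
    have "2*m+2-2*Suc k = 2*m-2*k" "m+1-Suc k = m-k" "m + Suc k = m+1+k" "Suc k - 1 = k" by auto
    then show ?thesis unfolding GT_def B1_def using assms h2[symmetric] h4[symmetric] by simp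
  qed
  have E5: "GT m i k = - 2 * real (m+1) * 2^k * (2*(2*real a+1)/(real a+1)*B1) * (real k/(real m+1)*B2) * B3"
  proof (cases "k = 0")
    case True then show ?thesis unfolding GT_def by simp
  next
    case False
    have "real ((m+k) choose (k-1)) = real k/(real m+1) * B2"
      using R5[of k m] False unfolding B2_def by (simp add: field_simps)
    moreover have "2*m+2-2*k = 2*(m+1)-2*k" by simp
    ultimately show ?thesis unfolding GT_def using False assms h1[symmetric] B3_def by simp
  qed
  have rm: "real m = real k + real a" using ma by simp
  have pos: "real k + 1 - real i > 0" using assms by simp
  define c1 where "c1 = 2*(2*real a+1)/(real a+1)"
  define c2 where "c2 = (real m+1+real k)/(real m+1)"
  define c3 where "c3 = real i/(real k+1-real i)"
  define c4 where "c4 = (real k+1)/(real k+1-real i)"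
  define c5 where "c5 = real k/(real m+1)"
  define X where "X = 2^k*B1*B2*B3"
  have L: "fT m i k = X * (real (m+1)*c1*c2 - 4*real(m+i)*c3 - 2*(4*real m+2*real i+3))"
    unfolding fT_def E1 E2 E3 X_def c1_def[symmetric] c2_def[symmetric] c3_def[symmetric]
    by (simp add: algebra_simps)
  have R: "GT m i (Suc k) - GT m i k = X * (-2*real(m+1)*2*c2*c4 + 2*real(m+1)*c1*c5)"
    unfolding E4 E5 X_def c1_def[symmetric] c2_def[symmetric] c4_def[symmetric] c5_def[symmetric]
    by (simp add: algebra_simps)
  have S: "real (m+1)*c1*c2 - 4*real(m+i)*c3 - 2*(4*real m+2*real i+3) = -2*real(m+1)*2*c2*c4 + 2*real(m+1)*c1*c5"
    unfolding c1_def c2_def c3_def c4_def c5_def of_nat_add rm of_nat_1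
    by (rule scal) (use pos in auto)
  show ?thesis unfolding L R S ..
qed

lemma step_all: assumes "k \<le> m+1" shows "fT m i k = GT m i (Suc k) - GT m i k"
proof -
  consider "k = m+1" | "k \<le> m" "k < i" | "k \<le> m" "i \<le> k" using assms by linarith
  then show ?thesis
    by cases (use step_last[of m i] step_zero[of k m i] step_main[of k m i] in auto)
qed

lemma dsum: "bm_d i m = (\<Sum>k<Suc m. sT m k i) / 4^m"
proof -
  have "(\<Sum>k=i..m. sT m k i) = (\<Sum>k<Suc m. sT m k i)"
    by (rule sum.mono_neutral_left) (auto simp: sT_def)
  moreover have "(4::real)^m = 2^(2*m)" by (simp add: power_mult)
  ultimately show ?thesis unfolding bm_d_def sT_def by simp
qed

lemma coeffrec: "2 * real (m+1) * bm_d i (m+1) =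
   (if i = 0 then 0 else 2 * real (m+i) * bm_d (i-1) m) + (4 * real m + 2 * real i + 3) * bm_d i m"
proof -
  have "(\<Sum>k<Suc (Suc m). fT m i k) = (\<Sum>k<Suc (Suc m). GT m i (Suc k) - GT m i k)"
    by (rule sum.cong) (auto intro!: step_all)
  also have "\<dots> = GT m i (Suc (Suc m)) - GT m i 0" by (rule sum_lessThan_telescope)
  also have "\<dots> = 0" by (simp add: GT_def)
  finally have tel: "(\<Sum>k<Suc (Suc m). fT m i k) = 0" .
  define S1 where "S1 = (\<Sum>k<Suc (Suc m). sT (m+1) k i)"
  define S0 where "S0 = (\<Sum>k<Suc m. sT m k i)"
  define S0' where "S0' = (if i = 0 then 0 else (\<Sum>k<Suc m. sT m k (i-1)))"
  have g1: "(\<Sum>k<Suc (Suc m). (if i = 0 \<or> m < k then 0 else sT m k (i-1))) = S0'"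
    unfolding S0'_def by (auto intro!: sum.cong)
  have g2: "(\<Sum>k<Suc (Suc m). (if m < k then 0 else sT m k i)) = S0"
    unfolding S0_def by (auto intro!: sum.cong)
  have "(\<Sum>k<Suc (Suc m). fT m i k) = real (m+1) * S1 - 4 * real (m+i) * S0'
        - 2 * (4 * real m + 2 * real i + 3) * S0"
    unfolding fT_def sum_subtractf sum_distrib_left[symmetric] g1 g2 S1_def by simp
  with tel have key: "real (m+1) * S1 = 4 * real (m+i) * S0' + 2 * (4 * real m + 2 * real i + 3) * S0"
    by simp
  have d1: "bm_d i (m+1) = S1 / 4^(m+1)" unfolding S1_def dsum by simp
  have d0: "bm_d i m = S0 / 4^m" unfolding S0_def dsum by simp
  have d0': "(if i = 0 then 0 else 2 * real (m+i) * bm_d (i-1) m) = 2 * real (m+i) * S0' / 4^m"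
    unfolding S0'_def dsum by simp
  have "2 * real (m+1) * bm_d i (m+1) = (real (m+1) * S1) / (2 * 4^m)"
    unfolding d1 by (simp add: field_simps)
  also have "\<dots> = (4 * real (m+i) * S0' + 2 * (4 * real m + 2 * real i + 3) * S0) / (2 * 4^m)"
    by (simp only: key)
  also have "\<dots> = (if i = 0 then 0 else 2 * real (m+i) * bm_d (i-1) m) + (4 * real m + 2 * real i + 3) * bm_d i m"
    unfolding d0 d0' by (simp add: field_simps)
  finally show ?thesis .
qed

lemma coeff_op: "coeff (smult c ([:2, 3:] * p) - [:0, 2, 2:] * pderiv p) j =
   c * (2 * coeff p j + (if j = 0 then 0 else 3 * coeff p (j-1)))
   - (2 * real j * coeff p j + (if j = 0 then 0 else 2 * real (j-1) * coeff p (j-1)))"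
proof -
  have "[:0, 2, 2:] * pderiv p = pCons 0 (smult 2 (pderiv p) + pCons 0 (smult 2 (pderiv p)))"
    by simp
  moreover have "[:2, 3:] * p = smult 2 p + pCons 0 (smult 3 p)" by simp
  ultimately show ?thesis
    by (cases j; cases "j - 1") (auto simp: coeff_pderiv coeff_pCons algebra_simps split: nat.splits)
qed

lemma d_zero: "m < i \<Longrightarrow> bm_d i m = 0" unfolding bm_d_def by simp

lemma cq: "coeff (bm_Q m) j = 2^m * fact m * (if j \<le> m then bm_d (m-j) m else 0)"
proof -
  have "coeff (\<Sum>i\<le>m. monom (bm_d i m) (m - i)) j = (\<Sum>i\<le>m. if i = m - j \<and> j \<le> m then bm_d i m else 0)"
    unfolding coeff_sum by (rule sum.cong) (auto simp: coeff_monom)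
  also have "\<dots> = (if j \<le> m then bm_d (m-j) m else 0)"
    by (cases "j \<le> m") (simp_all add: sum.delta)
  finally show ?thesis unfolding bm_Q_def by simp
qed

theorem mainTheorem6:
  shows "bm_Q 0 = 1 \<and>
    (\<forall>m::nat. bm_Q (Suc m) =
       smult (2 * real m + 1) ([:2, 3:] * bm_Q m) - [:0, 2, 2:] * pderiv (bm_Q m))"
proof (intro conjI allI)
  show "bm_Q 0 = 1" unfolding bm_Q_def bm_d_def by (simp add: monom_0 one_pCons)
next
  fix m :: nat
  show "bm_Q (Suc m) = smult (2 * real m + 1) ([:2, 3:] * bm_Q m) - [:0, 2, 2:] * pderiv (bm_Q m)"
  proof (rule poly_eqI)
    fix j
    show "coeff (bm_Q (Suc m)) j = coeff (smult (2 * real m + 1) ([:2, 3:] * bm_Q m) - [:0, 2, 2:] * pderiv (bm_Q m)) j"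
    proof (cases "j \<le> Suc m")
      case False
      then have "\<not> j - 1 \<le> m" "\<not> j \<le> m" "j \<noteq> 0" by auto
      then show ?thesis unfolding coeff_op cq by simp
    next
      case True
      define i where "i = Suc m - j"
      have ji: "j = Suc m - i" "i \<le> Suc m" using True unfolding i_def by auto
      have rec: "2 * real (m+1) * bm_d i (m+1) =
        (if i = 0 then 0 else 2 * real (m+i) * bm_d (i-1) m) + (4 * real m + 2 * real i + 3) * bm_d i m"
        by (rule coeffrec)
      show ?thesis
      proof (cases i)
        case 0
        then have "j = Suc m" using ji by simp
        then show ?thesis unfolding coeff_op cq using arg_cong[OF rec, of "\<lambda>x. 2^m*fact m*x"] 0 by (simp add: algebra_simps)
      next
        case (Suc i')
        show ?thesis
        proof (cases "j = 0")
          case True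
          then have "i = Suc m" using ji by simp
          then show ?thesis unfolding coeff_op cq using arg_cong[OF rec, of "\<lambda>x. 2^m*fact m*x"] True by (simp add: d_zero algebra_simps)
        next
          case False
          then show ?thesis unfolding coeff_op cq using arg_cong[OF rec, of "\<lambda>x. 2^m*fact m*x"] Suc ji
            by (simp add: algebra_simps of_nat_diff)
        qed
      qed
    qed
  qed
qed
end
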